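(* For any two simple graphs $G,F$ and any positive integer $k$, $$\mathrm{wsat}(G,F)\geq\frac{1}{k}\cdot\mathrm{rk}\text{-}\mathrm{sat}\left(G^k,\{F^k_e:\,e\in E(F)\}\right).$$
   Context: For a simple graph $G$, $G^k$ is the multigraph obtained from $G$ by taking $k$ instances of every edge. For $e\in E(F)$, $F^k_e$ is the multigraph on $V(F)$ containing each edge of $E(F)\setminus\{e\}$ exactly $k$ times and the edge $e$ exactly once. For simple graphs, $\mathrm{wsat}(G,F)$ is the minimum number of edges of a spanning subgraph $H\subseteq G$ from which $G$ can be obtained by adding the missing edges one at a time, each added edge creating a new copy of $F$ containing it. For a multigraph $G$ (edges are a multiset of pairs, distinct instances being distinct elements) and a family $\mathcal{F}$ of multigraphs, a matroid $M$ on $E(G)$ is weakly $\mathcal{F}$-saturated if every copy $\tilde F$ in $G$ of every $F\in\mathcal{F}$ is a cycle of $M$, i.e. $\mathrm{rk}_M(E(\tilde F)\setminus\{e\})=\mathrm{rk}_M(E(\tilde F))$ for all $e\in E(\tilde F)$; $\mathrm{rk}\text{-}\mathrm{sat}(G,\mathcal{F})$ is the maximum rank of such a matroid. *)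

theory Defs
  imports Complex_Main
begin

definition simple_graph :: "'a set \<Rightarrow> 'a set set \<Rightarrow> bool" where
  "simple_graph V E \<longleftrightarrow> finite V \<and> (\<forall>e\<in>E. e \<subseteq> V \<and> card e = 2)"

definition copy_containing ::
  "'a set \<Rightarrow> 'a set set \<Rightarrow> 'b set \<Rightarrow> 'b set set \<Rightarrow> 'a set \<Rightarrow> bool" where
  "copy_containing VG E VF EF e \<longleftrightarrow>
     (\<exists>\<phi>. inj_on \<phi> VF \<and> \<phi> ` VF \<subseteq> VG \<and> (\<forall>f\<in>EF. \<phi> ` f \<in> E) \<and> e \<in> (\<lambda>f. \<phi> ` f) ` EF)"

definition weakly_sat_graph ::
  "'a set \<Rightarrow> 'a set set \<Rightarrow> 'b set \<Rightarrow> 'b set set \<Rightarrow> 'a set set \<Rightarrow> bool" where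
  "weakly_sat_graph VG EG VF EF H \<longleftrightarrow> H \<subseteq> EG \<and>
     (\<exists>es. distinct es \<and> set es = EG - H \<and>
        (\<forall>i<length es. copy_containing VG (H \<union> set (take (Suc i) es)) VF EF (es ! i)))"

definition wsat :: "'a set \<Rightarrow> 'a set set \<Rightarrow> 'b set \<Rightarrow> 'b set set \<Rightarrow> nat" where
  "wsat VG EG VF EF = Min {card H | H. weakly_sat_graph VG EG VF EF H}"

text \<open>A multigraph is given by a vertex set, a set of edges (edge instances) and an endpoint
  map sending each edge to the set of its endpoints.\<close>
definition mg_copy ::
  "'v set \<Rightarrow> 'e set \<Rightarrow> ('e \<Rightarrow> 'v set) \<Rightarrow> 'w set \<Rightarrow> 'f set \<Rightarrow> ('f \<Rightarrow> 'w set) \<Rightarrow> 'e set \<Rightarrow> bool" where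
  "mg_copy VG EG endG VF EF endF S \<longleftrightarrow> S \<subseteq> EG \<and>
     (\<exists>\<phi> \<psi>. inj_on \<phi> VF \<and> \<phi> ` VF \<subseteq> VG \<and> bij_betw \<psi> EF S \<and>
        (\<forall>x\<in>EF. endG (\<psi> x) = \<phi> ` endF x))"

text \<open>G^k: k instances (e,i), i<k, of every edge e; endpoints are given by fst.\<close>
definition graph_pow :: "'a set set \<Rightarrow> nat \<Rightarrow> ('a set \<times> nat) set" where
  "graph_pow E k = E \<times> {..<k}"

definition graph_pow_but :: "'b set set \<Rightarrow> nat \<Rightarrow> 'b set \<Rightarrow> ('b set \<times> nat) set" where
  "graph_pow_but E k e = (E - {e}) \<times> {..<k} \<union> {(e, 0)}"

definition matroid_on :: "'e set \<Rightarrow> ('e set \<Rightarrow> bool) \<Rightarrow> bool" where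
  "matroid_on E indep \<longleftrightarrow> finite E \<and> (\<forall>X. indep X \<longrightarrow> X \<subseteq> E) \<and> indep {} \<and>
     (\<forall>X Y. indep Y \<and> X \<subseteq> Y \<longrightarrow> indep X) \<and>
     (\<forall>X Y. indep X \<and> indep Y \<and> card X < card Y \<longrightarrow> (\<exists>y\<in>Y - X. indep (insert y X)))"

definition mrank :: "('e set \<Rightarrow> bool) \<Rightarrow> 'e set \<Rightarrow> nat" where
  "mrank indep X = Max {card I | I. I \<subseteq> X \<and> indep I}"

text \<open>Weak saturation of a matroid on E(G) w.r.t. a family of multigraphs: every copy of every
  member of the family is a cycle of the matroid.\<close>
definition weakly_sat_matroid ::
  "'v set \<Rightarrow> 'e set \<Rightarrow> ('e \<Rightarrow> 'v set) \<Rightarrow> ('w set \<times> 'f set \<times> ('f \<Rightarrow> 'w set)) set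
     \<Rightarrow> ('e set \<Rightarrow> bool) \<Rightarrow> bool" where
  "weakly_sat_matroid VG EG endG Fam indep \<longleftrightarrow>
     (\<forall>(VF, EF, endF)\<in>Fam. \<forall>S. mg_copy VG EG endG VF EF endF S \<longrightarrow>
        (\<forall>x\<in>S. mrank indep (S - {x}) = mrank indep S))"

definition rk_sat ::
  "'v set \<Rightarrow> 'e set \<Rightarrow> ('e \<Rightarrow> 'v set) \<Rightarrow> ('w set \<times> 'f set \<times> ('f \<Rightarrow> 'w set)) set \<Rightarrow> nat" where
  "rk_sat VG EG endG Fam =
     Max {mrank indep EG | indep. matroid_on EG indep \<and> weakly_sat_matroid VG EG endG Fam indep}"

end

theory Submission
  imports Defs
begin

lemma mo_fin: "matroid_on E indep \<Longrightarrow> finite E" by (simp add: matroid_on_def)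
lemma mo_sub: "matroid_on E indep \<Longrightarrow> indep X \<Longrightarrow> X \<subseteq> E" by (simp add: matroid_on_def)
lemma mo_empty: "matroid_on E indep \<Longrightarrow> indep {}" by (simp add: matroid_on_def)
lemma m_sub: "matroid_on E indep \<Longrightarrow> indep Y \<Longrightarrow> X \<subseteq> Y \<Longrightarrow> indep X"
  unfolding matroid_on_def by (elim conjE, blast)
lemma exch: "matroid_on E indep \<Longrightarrow> indep X \<Longrightarrow> indep Y \<Longrightarrow> card X < card Y \<Longrightarrow> \<exists>y\<in>Y-X. indep (insert y X)"
  unfolding matroid_on_def by (elim conjE, blast)
lemma m_fin: "matroid_on E indep \<Longrightarrow> indep X \<Longrightarrow> finite X \<and> X \<subseteq> E"
  using mo_fin mo_sub finite_subset by metis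

lemma mrank_set_fin: "matroid_on E indep \<Longrightarrow> finite {card I | I. I \<subseteq> X \<and> indep I}"
proof -
  assume m: "matroid_on E indep"
  have "{card I | I. I \<subseteq> X \<and> indep I} \<subseteq> card ` Pow E" using mo_sub[OF m] by blast
  moreover have "finite (Pow E)" using mo_fin[OF m] by simp
  ultimately show ?thesis by (meson finite_imageI finite_subset)
qed

lemma mrank_ge: "matroid_on E indep \<Longrightarrow> J \<subseteq> X \<Longrightarrow> indep J \<Longrightarrow> card J \<le> mrank indep X"
  unfolding mrank_def by (rule Max_ge[OF mrank_set_fin]) auto

lemma mrank_obtain:
  assumes "matroid_on E indep"
  obtains J where "J \<subseteq> X" "indep J" "card J = mrank indep X"
proof -
  have "mrank indep X \<in> {card I | I. I \<subseteq> X \<and> indep I}"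
    unfolding mrank_def apply (rule Max_in[OF mrank_set_fin[OF assms]])
    using mo_empty[OF assms] by auto
  then show ?thesis using that by auto
qed

lemma extend:
  assumes m: "matroid_on E indep"
  shows "indep J \<Longrightarrow> J \<subseteq> X \<Longrightarrow> \<exists>K. J \<subseteq> K \<and> K \<subseteq> X \<and> indep K \<and> card K = mrank indep X"
proof (induction "mrank indep X - card J" arbitrary: J rule: less_induct)
  case less
  show ?case
  proof (cases "card J < mrank indep X")
    case False
    hence "card J = mrank indep X" using mrank_ge[OF m less.prems(2,1)] by simp
    thus ?thesis using less.prems by (intro exI[of _ J] conjI) simp_all
  next
    case True
    obtain I0 where I0: "I0 \<subseteq> X" "indep I0" "card I0 = mrank indep X" using mrank_obtain[OF m] by blast
    then obtain y where y: "y \<in> I0" "y \<notin> J" "indep (insert y J)"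
      using exch[OF m less.prems(1) I0(2)] True by auto
    have fJ: "finite J" using m_fin[OF m less.prems(1)] by simp
    have c: "card (insert y J) = Suc (card J)" using y fJ by simp
    have lt: "mrank indep X - card (insert y J) < mrank indep X - card J" using c True by simp
    have sx: "insert y J \<subseteq> X" using y(1) I0(1) less.prems(2) by blast
    obtain K where K: "insert y J \<subseteq> K" "K \<subseteq> X" "indep K" "card K = mrank indep X"
      using less.hyps[OF lt y(3) sx] by blast
    show ?thesis using K by (intro exI[of _ K]) blast
  qed
qed

lemma span_bound:
  assumes m: "matroid_on E indep" and I: "indep I" and J: "indep J"
    and JD: "J \<subseteq> {x. indep (insert x I) \<longrightarrow> x \<in> I}"
  shows "card J \<le> card I"
proof (rule ccontr)
  assume "\<not> card J \<le> card I"
  then obtain y where "y \<in> J - I" "indep (insert y I)" using exch[OF m I J] by auto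
  then show False using JD by auto
qed

lemma span_rank:
  assumes m: "matroid_on E indep" and I: "indep I"
    and XD: "X \<subseteq> {x. indep (insert x I) \<longrightarrow> x \<in> I}"
  shows "mrank indep X \<le> card I"
proof -
  obtain J where "J \<subseteq> X" "indep J" "card J = mrank indep X" using mrank_obtain[OF m] by blast
  then show ?thesis using span_bound[OF m I, of J] XD by auto
qed

lemma key:
  assumes m: "matroid_on E indep" and I: "indep I" and x: "x \<in> S"
    and S: "S - {x} \<subseteq> {x. indep (insert x I) \<longrightarrow> x \<in> I}"
    and eq: "mrank indep (S - {x}) = mrank indep S"
  shows "indep (insert x I) \<longrightarrow> x \<in> I"
proof (rule ccontr)
  define D where "D = {x. indep (insert x I) \<longrightarrow> x \<in> I}"
  assume "\<not> (indep (insert x I) \<longrightarrow> x \<in> I)"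
  hence xI: "indep (insert x I)" "x \<notin> I" by auto
  obtain K where K: "K \<subseteq> S - {x}" "indep K" "card K = mrank indep (S - {x})"
    using mrank_obtain[OF m] by blast
  obtain K1 where K1: "K \<subseteq> K1" "K1 \<subseteq> D" "indep K1" "card K1 = mrank indep D"
    using extend[OF m K(2), of D] K(1) S unfolding D_def by blast
  have "I \<subseteq> D" unfolding D_def by auto
  hence c1: "card I \<le> mrank indep D" using mrank_ge[OF m _ I] by auto
  have c2: "mrank indep D \<le> card I" using span_rank[OF m I] unfolding D_def by auto
  have fI: "finite I" using m_fin[OF m I] by simp
  have fK1: "finite K1" using m_fin[OF m K1(3)] by simp
  have "card (insert x I) = Suc (card I)" using fI xI by simp
  hence "card K1 < card (insert x I)" using c1 c2 K1(4) by simp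
  then obtain y where y: "y \<in> insert x I - K1" "indep (insert y K1)" using exch[OF m K1(3) xI(1)] by auto
  show False
  proof (cases "y = x")
    case True
    have iK: "indep (insert x K)" using m_sub[OF m y(2)] True K1(1) by blast
    have fK: "finite K" using m_fin[OF m K(2)] by simp
    have "x \<notin> K" using K(1) by auto
    hence "card (insert x K) = Suc (card K)" using fK by simp
    moreover have "card (insert x K) \<le> mrank indep S" using mrank_ge[OF m _ iK] K(1) x by auto
    ultimately show False using K(3) eq by simp
  next
    case False
    hence "y \<in> I" "y \<notin> K1" using y(1) by auto
    hence "insert y K1 \<subseteq> D" using K1(2) \<open>I \<subseteq> D\<close> by auto
    hence "card (insert y K1) \<le> mrank indep D" using mrank_ge[OF m _ y(2)] by auto
    moreover have "card (insert y K1) = Suc (card K1)" using fK1 \<open>y \<notin> K1\<close> by simp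
    ultimately show False using K1(4) by simp
  qed
qed

lemma copy_step:
  assumes sF: "simple_graph VF EF" and inj: "inj_on \<phi> VF" and img: "\<phi> ` VF \<subseteq> VG"
   and fe: "\<forall>f\<in>EF. \<phi> ` f \<in> A" and f0: "f0 \<in> EF" and AE: "A \<subseteq> EG" and j: "j < k"
  shows "mg_copy VG (graph_pow EG k) fst VF (graph_pow_but EF k f0) fst
          ((\<lambda>(f,l). (\<phi> ` f, l)) ` ((EF - {f0}) \<times> {..<k}) \<union> {(\<phi> ` f0, j)})"
proof -
  have eq: "f = g" if "f \<in> EF" "g \<in> EF" "\<phi> ` f = \<phi> ` g" for f g
  proof -
    have "f \<subseteq> VF" "g \<subseteq> VF" using sF that(1,2) unfolding simple_graph_def by auto
    thus ?thesis using inj_on_image_eq_iff[OF inj] that(3) by blast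
  qed
  define \<psi> where "\<psi> = (\<lambda>(f,l). if f = f0 then (\<phi> ` f0, j) else (\<phi> ` f, (l::nat)))"
  have inj\<psi>: "inj_on \<psi> (graph_pow_but EF k f0)"
  proof (rule inj_onI)
    fix a b assume a: "a \<in> graph_pow_but EF k f0" and b: "b \<in> graph_pow_but EF k f0" and e: "\<psi> a = \<psi> b"
    obtain f l g m where ab: "a = (f,l)" "b = (g,m)" by fastforce
    have fl: "f \<in> EF" "f = f0 \<longrightarrow> l = 0" and gm: "g \<in> EF" "g = f0 \<longrightarrow> m = 0"
      using a b f0 ab unfolding graph_pow_but_def by auto
    show "a = b"
    proof (cases "f = f0")
      case True
      show ?thesis
      proof (cases "g = f0")
        case True
        then show ?thesis using \<open>f = f0\<close> fl gm ab by simp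
      next
        case False
        hence "\<phi> ` g = \<phi> ` f0" using e ab \<open>f = f0\<close> unfolding \<psi>_def by simp
        hence "g = f0" using eq gm(1) f0 by blast
        then show ?thesis using False by simp
      qed
    next
      case False
      show ?thesis
      proof (cases "g = f0")
        case True
        hence "\<phi> ` f = \<phi> ` f0" using e ab False unfolding \<psi>_def by simp
        hence "f = f0" using eq fl(1) f0 by blast
        then show ?thesis using False by simp
      next
        case False2: False
        hence "\<phi> ` f = \<phi> ` g" "l = m" using e ab False unfolding \<psi>_def by simp_all
        hence "f = g" using eq fl(1) gm(1) by blast
        then show ?thesis using ab \<open>l = m\<close> by simp
      qed
    qed
  qed
  have im\<psi>: "\<psi> ` (graph_pow_but EF k f0) = (\<lambda>(f,l). (\<phi> ` f, l)) ` ((EF - {f0}) \<times> {..<k}) \<union> {(\<phi> ` f0, j)}"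
  proof -
    have "\<psi> ` ((EF - {f0}) \<times> {..<k}) = (\<lambda>(f,l). (\<phi> ` f, l)) ` ((EF - {f0}) \<times> {..<k})"
      unfolding \<psi>_def by (rule image_cong[OF refl]) (clarsimp split: if_split_asm)
    moreover have "\<psi> (f0, 0) = (\<phi> ` f0, j)" unfolding \<psi>_def by simp
    ultimately show ?thesis unfolding graph_pow_but_def by (simp add: image_Un)
  qed
  have sub: "(\<lambda>(f,l). (\<phi> ` f, l)) ` ((EF - {f0}) \<times> {..<k}) \<union> {(\<phi> ` f0, j)} \<subseteq> graph_pow EG k"
    unfolding graph_pow_def using fe AE f0 j by auto
  have ends: "\<forall>x\<in>graph_pow_but EF k f0. fst (\<psi> x) = \<phi> ` fst x"
    unfolding graph_pow_but_def \<psi>_def by auto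
  have bij: "bij_betw \<psi> (graph_pow_but EF k f0) ((\<lambda>(f,l). (\<phi> ` f, l)) ` ((EF - {f0}) \<times> {..<k}) \<union> {(\<phi> ` f0, j)})"
    unfolding bij_betw_def using inj\<psi> im\<psi> by simp
  show ?thesis unfolding mg_copy_def
    by (intro conjI sub exI[of _ \<phi>] exI[of _ \<psi>] inj img bij ends)
qed

theorem lemma3:
  fixes VG :: "'a set" and EG :: "'a set set" and VF :: "'b set" and EF :: "'b set set"
    and k :: nat
  assumes "simple_graph VG EG" and "simple_graph VF EF" and "0 < k"
  shows "real (wsat VG EG VF EF) \<ge>
           real (rk_sat VG (graph_pow EG k) fst
                   {(VF, graph_pow_but EF k e, fst) | e. e \<in> EF}) / real k"
proof -
  have finVG: "finite VG" and EGsub: "\<forall>e\<in>EG. e \<subseteq> VG" using assms(1) unfolding simple_graph_def by auto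
  have finEG: "finite EG" using finite_subset[of EG "Pow VG"] finVG EGsub by auto
  define E where "E = graph_pow EG k"
  have finE: "finite E" unfolding E_def graph_pow_def using finEG by simp
  define Fam where "Fam = {(VF, graph_pow_but EF k e, fst :: 'b set \<times> nat \<Rightarrow> 'b set) | e. e \<in> EF}"
  let ?W = "{card H | H. weakly_sat_graph VG EG VF EF H}"
  have "weakly_sat_graph VG EG VF EF EG" unfolding weakly_sat_graph_def
    by (intro conjI exI[of _ "[]"]) auto
  hence Wne: "?W \<noteq> {}" by blast
  have "?W \<subseteq> card ` Pow EG" unfolding weakly_sat_graph_def by blast
  hence Wfin: "finite ?W" using finEG by (meson finite_Pow_iff finite_imageI finite_subset)
  have "wsat VG EG VF EF \<in> ?W" unfolding wsat_def using Min_in[OF Wfin Wne] .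
  then obtain H where Hw: "weakly_sat_graph VG EG VF EF H" and Hc: "card H = wsat VG EG VF EF" by auto
  obtain es where HEG: "H \<subseteq> EG" and es: "set es = EG - H"
    and esc: "\<forall>i<length es. copy_containing VG (H \<union> set (take (Suc i) es)) VF EF (es ! i)"
    using Hw unfolding weakly_sat_graph_def by blast
  have finH: "finite H" using HEG finEG finite_subset by blast
  have bound: "mrank indep E \<le> k * card H"
    if m: "matroid_on E indep" and ws: "weakly_sat_matroid VG E fst Fam indep" for indep
  proof -
    define B where "B = H \<times> {..<k}"
    have finB: "finite B" unfolding B_def using finH by simp
    obtain I where I: "I \<subseteq> B" "indep I" "card I = mrank indep B" using mrank_obtain[OF m] by blast
    define D where "D = {x. indep (insert x I) \<longrightarrow> x \<in> I}"
    have finI: "finite I" using m_fin[OF m I(2)] by simp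
    have BD: "B \<subseteq> D"
    proof
      fix b assume b: "b \<in> B"
      show "b \<in> D" unfolding D_def
      proof (intro CollectI impI, rule ccontr)
        assume "indep (insert b I)" "b \<notin> I"
        hence "card (insert b I) \<le> mrank indep B" "card (insert b I) = Suc (card I)"
          using mrank_ge[OF m _ \<open>indep (insert b I)\<close>, of B] b I(1) finI by auto
        thus False using I(3) by simp
      qed
    qed
    have inv: "i \<le> length es \<Longrightarrow> (H \<union> set (take i es)) \<times> {..<k} \<subseteq> D" for i
    proof (induction i)
      case 0
      then show ?case using BD unfolding B_def by simp
    next
      case (Suc i)
      hence il: "i < length es" by simp
      have tk: "take (Suc i) es = take i es @ [es ! i]" using il by (simp add: take_Suc_conv_app_nth)
      have IH: "(H \<union> set (take i es)) \<times> {..<k} \<subseteq> D" using Suc by simp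
      have new: "(es ! i, j) \<in> D" if j: "j < k" for j
      proof -
        have cc: "copy_containing VG (H \<union> set (take (Suc i) es)) VF EF (es ! i)" using esc il by simp
        then obtain \<phi> where \<phi>0: "inj_on \<phi> VF \<and> \<phi> ` VF \<subseteq> VG \<and> (\<forall>f\<in>EF. \<phi> ` f \<in> H \<union> set (take (Suc i) es))
             \<and> es ! i \<in> (\<lambda>f. \<phi> ` f) ` EF"
          unfolding copy_containing_def by (elim exE) (rule that)
        have \<phi>: "inj_on \<phi> VF" "\<phi> ` VF \<subseteq> VG" "\<forall>f\<in>EF. \<phi> ` f \<in> H \<union> set (take (Suc i) es)"
          and f0: "es ! i \<in> (\<lambda>f. \<phi> ` f) ` EF" using \<phi>0 by simp_all
        obtain f0 where f0E: "f0 \<in> EF" and ei: "es ! i = \<phi> ` f0" using f0 by blast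
        have eq: "f = g" if "f \<in> EF" "g \<in> EF" "\<phi> ` f = \<phi> ` g" for f g
        proof -
          have "f \<subseteq> VF" "g \<subseteq> VF" using assms(2) that(1,2) unfolding simple_graph_def by auto
          thus ?thesis using inj_on_image_eq_iff[OF \<phi>(1)] that(3) by blast
        qed
        have AE: "H \<union> set (take (Suc i) es) \<subseteq> EG" using HEG es set_take_subset[of "Suc i" es] by blast
        define S where "S = (\<lambda>(f,l). (\<phi> ` f, l)) ` ((EF - {f0}) \<times> {..<k}) \<union> {(\<phi> ` f0, j)}"
        have cp: "mg_copy VG E fst VF (graph_pow_but EF k f0) fst S"
          unfolding S_def E_def using copy_step[OF assms(2) \<phi>(1,2,3) f0E AE j] .
        have "(VF, graph_pow_but EF k f0, fst) \<in> Fam" unfolding Fam_def using f0E by blast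
        hence rk: "mrank indep (S - {(\<phi> ` f0, j)}) = mrank indep S"
          using ws cp unfolding weakly_sat_matroid_def S_def by fastforce
        have Ssub: "S - {(\<phi> ` f0, j)} \<subseteq> D"
        proof
          fix z assume z: "z \<in> S - {(\<phi> ` f0, j)}"
          then obtain f l where fl: "f \<in> EF" "f \<noteq> f0" "l < k" "z = (\<phi> ` f, l)" unfolding S_def by auto
          have "\<phi> ` f \<noteq> \<phi> ` f0" using eq fl f0E by blast
          hence "\<phi> ` f \<in> H \<union> set (take i es)" using \<phi>(3) fl(1) tk ei by auto
          thus "z \<in> D" using IH fl by auto
        qed
        have "(\<phi> ` f0, j) \<in> S" unfolding S_def by simp
        from key[OF m I(2) this Ssub[unfolded D_def] rk]
        show ?thesis unfolding D_def ei by simp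
      qed
      show ?case using IH new tk by auto
    qed
    have "EG = H \<union> set (take (length es) es)" using es HEG by auto
    hence "E \<subseteq> D" using inv[of "length es"] unfolding E_def graph_pow_def by simp
    hence "mrank indep E \<le> card I" using span_rank[OF m I(2)] unfolding D_def by blast
    also have "card I \<le> card B" using card_mono[OF finB I(1)] .
    also have "card B = k * card H" unfolding B_def using finH by simp
    finally show ?thesis .
  qed
  let ?R = "{mrank indep E | indep. matroid_on E indep \<and> weakly_sat_matroid VG E fst Fam indep}"
  have triv: "matroid_on E (\<lambda>X. X = {})" unfolding matroid_on_def using finE by auto
  have trivr: "mrank (\<lambda>X. X = {}) X = 0" for X unfolding mrank_def by auto
  have trivw: "weakly_sat_matroid VG E fst Fam (\<lambda>X. X = {})"
    unfolding weakly_sat_matroid_def trivr by auto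
  have Rne: "?R \<noteq> {}" using triv trivw by blast
  have Rsub: "?R \<subseteq> {..k * card H}" using bound by auto
  hence Rfin: "finite ?R" using finite_subset by blast
  have "rk_sat VG E fst Fam \<le> k * card H"
    unfolding rk_sat_def using Rsub Max_le_iff[OF Rfin Rne] by auto
  hence "real (rk_sat VG E fst Fam) \<le> real k * real (wsat VG EG VF EF)"
    using Hc by (metis of_nat_le_iff of_nat_mult)
  thus ?thesis unfolding E_def Fam_def using assms(3) by (simp add: divide_le_eq mult.commute)
qed

end
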